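(* Let $V=(v_1,\dots,v_n)$ be an exchange collection in $(L,\omega)$, and let $L'\subset L$ be a sublattice of finite index containing all $v_i$, with form $\omega'=\omega|_{L'}$. Via restriction, $L^*\subset L'^*$, hence $\mathcal Q[L^*]\subset\mathcal Q[L'^*]$ and $\mathbb K_L\subset\mathbb K_{L'}$. The finite group $G=L/L'$ acts on $\mathcal Q[L'^*]$ and on $\mathbb K_{L'}$ by letting $n\in L$ send $X^{m'}\mapsto e^{2\pi i (m',n)}X^{m'}$, where $(m',n)\in\mathbb Q$ is the $\mathbb Q$-linear extension of the pairing $L'^*\times L'\to\mathbb Z$. Then $$\mathcal U(L,\omega;V)=\mathcal U(L',\omega';V)^G=\mathcal U(L',\omega';V)\cap\mathcal Q[L^*].$$
   Context: Let $L\cong\mathbb Z^r$ be a lattice, $L^*=\mathrm{Hom}(L,\mathbb Z)$, $(\cdot,\cdot)$ the canonical pairing, and $\omega:L\times L\to\mathbb Z$ a skew-symmetric bilinear form. Let $\mathcal Q=\mathbb Q(e^{2\pi i\mathbb Q})$ be $\mathbb Q$ with all roots of unity adjoined, $\mathcal Q[L^*]$ the group algebra of $L^*$ with monomials $X^m$ ($m\in L^*$), and $\mathbb K_L$ its fraction field (similarly for $L'$). For $v\in L$ let $\mu_v^*$ be the $\mathcal Q$-algebra automorphism of $\mathbb K_L$ given by $\mu_v^*(X^m)=X^m\,(1+X^{\omega(\cdot,v)})^{-(m,v)}$, where $\omega(\cdot,v)\in L^*$ is $w\mapsto\omega(w,v)$. An exchange collection is an $n$-tuple $V\in L^n$ (repetitions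 allowed), with multiplicity function $m_V(v)=\#\{i: v_i=v\}$. The upper bound is $\mathcal U(L,\omega;V)=\mathcal Q[L^*]\cap\bigcap_{v\in L}(\mu_v^* )^{m_V(v)}(\mathcal Q[L^*])\subset\mathbb K_L$, and analogously $\mathcal U(L',\omega';V)\subset\mathbb K_{L'}$ using the mutations of $(L',\omega')$. *)

theory Defs
  imports Complex_Main "HOL-Library.Function_Algebras" "HOL-Library.Poly_Mapping" "HOL-Computational_Algebra.Fraction_Field"
begin

text \<open>
The lattice L is Z^r, with r = CARD('r) (the index type 'r is finite and
linearly ordered).  Characters
(exponents) are rational vectors 'r =>0 rat, i.e. elements of Q (x) L^*; the pairing
with a lattice vector is the standard dot product.  L^* and L'^* are the subgroups
of rational vectors pairing integrally with L resp. L'  (this is the inclusion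
L^* in L'^* given by restriction).  All group algebras live in the ambient
group algebra  ('r =>0 rat) =>0 complex, which is an integral domain, and all
fraction fields are subfields of its field of fractions.
\<close>

type_synonym 'r lvec = "'r \<Rightarrow> int"
type_synonym 'r expo = "'r \<Rightarrow>\<^sub>0 rat"
type_synonym 'r galg = "'r expo \<Rightarrow>\<^sub>0 complex"

inductive_set cyclo_field :: "complex set" where
  rat: "of_rat q \<in> cyclo_field"
| root: "cis (2 * pi * of_rat q) \<in> cyclo_field"
| add: "x \<in> cyclo_field \<Longrightarrow> y \<in> cyclo_field \<Longrightarrow> x + y \<in> cyclo_field"
| mult: "x \<in> cyclo_field \<Longrightarrow> y \<in> cyclo_field \<Longrightarrow> x * y \<in> cyclo_field"
| uminus: "x \<in> cyclo_field \<Longrightarrow> - x \<in> cyclo_field"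
| inverse: "x \<in> cyclo_field \<Longrightarrow> inverse x \<in> cyclo_field"

definition pair :: "('r::finite) expo \<Rightarrow> 'r lvec \<Rightarrow> rat" where
  "pair m w = (\<Sum>i\<in>UNIV. Poly_Mapping.lookup m i * of_int (w i))"

definition dual :: "('r::finite) lvec set \<Rightarrow> 'r expo set" where
  "dual Lat = {m. \<forall>w\<in>Lat. pair m w \<in> \<int>}"

definition unit_vec :: "'r \<Rightarrow> 'r lvec" where
  "unit_vec i = (\<lambda>j. if j = i then 1 else 0)"

definition omega_char :: "('r::finite lvec \<Rightarrow> 'r lvec \<Rightarrow> int) \<Rightarrow> 'r lvec \<Rightarrow> 'r expo" where
  "omega_char \<omega> v = (\<Sum>i\<in>UNIV. Poly_Mapping.single i (of_int (\<omega> (unit_vec i) v)))"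

text \<open>Group algebra Q[M] for an exponent group M (monomial X^m = single m 1).\<close>
definition gpoly :: "('r::{finite,linorder}) expo set \<Rightarrow> 'r galg set" where
  "gpoly M = {f. Poly_Mapping.keys f \<subseteq> M \<and> (\<forall>m. Poly_Mapping.lookup f m \<in> cyclo_field)}"

definition gpolyF :: "('r::{finite,linorder}) expo set \<Rightarrow> 'r galg fract set" where
  "gpolyF M = (\<lambda>p. Fract p 1) ` gpoly M"

definition fracfield :: "('r::{finite,linorder}) expo set \<Rightarrow> 'r galg fract set" where
  "fracfield M = {Fract p q | p q. p \<in> gpoly M \<and> q \<in> gpoly M \<and> q \<noteq> 0}"

definition mu_pol :: "('r::{finite,linorder}) expo \<Rightarrow> 'r lvec \<Rightarrow> 'r galg \<Rightarrow> 'r galg fract" where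
  "mu_pol a v p = (\<Sum>m\<in>Poly_Mapping.keys p. Fract (Poly_Mapping.single m (Poly_Mapping.lookup p m)) 1
        * (Fract (1 + Poly_Mapping.single a 1) 1) powi (- \<lfloor>pair m v\<rfloor>))"

definition mu :: "('r::{finite,linorder}) expo set \<Rightarrow> 'r expo \<Rightarrow> 'r lvec \<Rightarrow> 'r galg fract \<Rightarrow> 'r galg fract" where
  "mu M a v x = (let (p, q) = (SOME (p, q). p \<in> gpoly M \<and> q \<in> gpoly M \<and> q \<noteq> 0 \<and> x = Fract p q)
                 in mu_pol a v p / mu_pol a v q)"

definition upper_bound :: "('r::{finite,linorder}) lvec set \<Rightarrow> ('r lvec \<Rightarrow> 'r lvec \<Rightarrow> int)
     \<Rightarrow> 'r lvec list \<Rightarrow> 'r galg fract set" where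
  "upper_bound Lat \<omega> V = gpolyF (dual Lat) \<inter>
      (\<Inter>v\<in>Lat. (mu (dual Lat) (omega_char \<omega> v) v ^^ count_list V v) ` gpolyF (dual Lat))"

definition act :: "('r::{finite,linorder}) lvec \<Rightarrow> 'r galg \<Rightarrow> 'r galg" where
  "act n f = (\<Sum>m\<in>Poly_Mapping.keys f. Poly_Mapping.single m (cis (2 * pi * of_rat (pair m n)) * Poly_Mapping.lookup f m))"

definition act_fract :: "('r::{finite,linorder}) lvec \<Rightarrow> 'r galg fract \<Rightarrow> 'r galg fract" where
  "act_fract n x = (let (p, q) = (SOME (p, q). q \<noteq> 0 \<and> x = Fract p q) in Fract (act n p) (act n q))"

text \<open>Fixed points of G = L/L' (n ranges over L; the action only depends on n mod L').\<close>
definition invariants :: "(('r::{finite,linorder}) galg fract) set \<Rightarrow> 'r galg fract set" where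
  "invariants S = {x \<in> S. \<forall>n::'r lvec. act_fract n x = x}"

end

theory Submission
  imports Defs
begin


definition Phi :: "('a::comm_monoid_add \<Rightarrow> 'b::comm_ring_1 \<Rightarrow> 'c::comm_ring_1) \<Rightarrow> ('a \<Rightarrow>\<^sub>0 'b) \<Rightarrow> 'c" where
  "Phi F p = (\<Sum>m\<in>Poly_Mapping.keys p. F m (Poly_Mapping.lookup p m))"

lemma sum_single_keys: "(\<Sum>m\<in>Poly_Mapping.keys p. Poly_Mapping.single m (Poly_Mapping.lookup p m)) = p"
proof (rule poly_mapping_eqI)
  fix k
  show "Poly_Mapping.lookup (\<Sum>m\<in>Poly_Mapping.keys p. Poly_Mapping.single m (Poly_Mapping.lookup p m)) k = Poly_Mapping.lookup p k"
    by (simp add: lookup_sum lookup_single when_def in_keys_iff)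
qed

lemma Phi_superset:
  assumes "finite S" "Poly_Mapping.keys p \<subseteq> S" "\<And>m. F m 0 = 0"
  shows "Phi F p = (\<Sum>m\<in>S. F m (Poly_Mapping.lookup p m))"
  unfolding Phi_def
  by (rule sum.mono_neutral_left) (use assms in \<open>auto simp: in_keys_iff\<close>)

lemma Phi_add:
  assumes "\<And>m. F m 0 = 0" "\<And>m c d. F m (c + d) = F m c + F m d"
  shows "Phi F (p + q) = Phi F p + Phi F q"
proof -
  let ?S = "Poly_Mapping.keys p \<union> Poly_Mapping.keys q"
  have f: "finite ?S" by simp
  have "Phi F (p + q) = (\<Sum>m\<in>?S. F m (Poly_Mapping.lookup (p+q) m))"
    using keys_add[of p q] by (intro Phi_superset f) (auto simp: assms)
  also have "\<dots> = (\<Sum>m\<in>?S. F m (Poly_Mapping.lookup p m)) + (\<Sum>m\<in>?S. F m (Poly_Mapping.lookup q m))"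
    by (simp add: lookup_add assms sum.distrib)
  also have "\<dots> = Phi F p + Phi F q"
    by (subst (1 2) Phi_superset[OF f]) (auto simp: assms)
  finally show ?thesis .
qed

lemma Phi_zero: "Phi F 0 = 0" by (simp add: Phi_def)

lemma Phi_sum:
  assumes "\<And>m. F m 0 = 0" "\<And>m c d. F m (c + d) = F m c + F m d"
  shows "Phi F (sum f S) = (\<Sum>i\<in>S. Phi F (f i))"
  by (induction S rule: infinite_finite_induct) (auto simp: Phi_zero Phi_add[OF assms])

lemma Phi_single:
  assumes "\<And>m. F m 0 = 0"
  shows "Phi F (Poly_Mapping.single k c) = F k c"
  using assms by (simp add: Phi_def)

lemma Phi_minus:
  fixes F :: "'a::comm_monoid_add \<Rightarrow> 'b::comm_ring_1 \<Rightarrow> 'c::comm_ring_1" and p q :: "'a \<Rightarrow>\<^sub>0 'b"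
  assumes "\<And>m. F m 0 = 0" "\<And>m c d. F m (c + d) = F m c + F m d"
  shows "Phi F (p - q) = Phi F p - Phi F q"
  using Phi_add[where F=F and p="p - q" and q=q, OF assms] by (simp add: algebra_simps)

lemma Phi_mult:
  assumes z: "\<And>m. F m 0 = 0" and a: "\<And>m c d. F m (c + d) = F m c + F m d"
    and mu: "\<And>m m' c d. m \<in> M \<Longrightarrow> m' \<in> M \<Longrightarrow> F (m + m') (c * d) = F m c * F m' d"
    and kp: "Poly_Mapping.keys p \<subseteq> M" and kq: "Poly_Mapping.keys q \<subseteq> M"
  shows "Phi F (p * q) = Phi F p * Phi F q"
proof -
  have "p * q = (\<Sum>m\<in>Poly_Mapping.keys p. Poly_Mapping.single m (Poly_Mapping.lookup p m)) *
                (\<Sum>m\<in>Poly_Mapping.keys q. Poly_Mapping.single m (Poly_Mapping.lookup q m))"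
    by (simp add: sum_single_keys)
  also have "\<dots> = (\<Sum>m\<in>Poly_Mapping.keys p. \<Sum>m'\<in>Poly_Mapping.keys q.
       Poly_Mapping.single (m + m') (Poly_Mapping.lookup p m * Poly_Mapping.lookup q m'))"
    by (simp add: sum_product mult_single)
  finally have "Phi F (p * q) = (\<Sum>m\<in>Poly_Mapping.keys p. \<Sum>m'\<in>Poly_Mapping.keys q.
       F (m + m') (Poly_Mapping.lookup p m * Poly_Mapping.lookup q m'))"
    by (simp add: Phi_sum[OF z a] Phi_single[where F=F, OF z])
  also have "\<dots> = (\<Sum>m\<in>Poly_Mapping.keys p. \<Sum>m'\<in>Poly_Mapping.keys q.
       F m (Poly_Mapping.lookup p m) * F m' (Poly_Mapping.lookup q m'))"
    using kp kq by (intro sum.cong refl mu) auto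
  also have "\<dots> = Phi F p * Phi F q"
    by (simp add: Phi_def sum_product)
  finally show ?thesis .
qed

lemma Phi_one:
  assumes "\<And>m. F m 0 = 0" "F 0 1 = 1"
  shows "Phi F 1 = 1"
  using Phi_single[of F 0 1] assms by (simp add: one_poly_mapping.abs_eq single.abs_eq)




lemma pair_add: "pair (m + m') w = pair m w + pair m' w"
  by (simp add: pair_def lookup_add distrib_right sum.distrib)

lemma pair_zero[simp]: "pair 0 w = 0"
  by (simp add: pair_def)

lemma dual_add: "m \<in> dual L \<Longrightarrow> m' \<in> dual L \<Longrightarrow> m + m' \<in> dual L"
  by (auto simp: dual_def pair_add)

lemma dual_zero: "0 \<in> dual L"
  by (simp add: dual_def)

lemma dual_UNIV_sub: "dual UNIV \<subseteq> dual L"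
  by (auto simp: dual_def)

lemma lookup_omega_char: "Poly_Mapping.lookup (omega_char \<omega> v) j = of_int (\<omega> (unit_vec j) v)"
  by (simp add: omega_char_def lookup_sum lookup_single when_def)

lemma sum_fun_app: "(sum f S :: 'a \<Rightarrow> 'b::comm_monoid_add) t = (\<Sum>i\<in>S. f i t)"
  by (induction S rule: infinite_finite_induct) auto

lemma additive_facts:
  fixes g :: "('r::finite) lvec \<Rightarrow> int"
  assumes add: "\<And>x y. g (x + y) = g x + g y"
  shows "g 0 = 0" and "g (\<lambda>t. c * x t) = c * g x" and "g (sum f S) = (\<Sum>i\<in>S. g (f i))"
proof -
  show g0: "g 0 = 0" using add[of 0 0] by simp
  show "g (\<lambda>t. c * x t) = c * g x"
  proof (induction c rule: int_induct[where k=0])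
    case base then show ?case using g0 by (simp add: zero_fun_def)
  next
    case (step1 i)
    have "(\<lambda>t. (i + 1) * x t) = (\<lambda>t. i * x t) + x" by (auto simp: algebra_simps)
    then show ?case using step1 add by (simp add: algebra_simps)
  next
    case (step2 i)
    have "(\<lambda>t. i * x t) = (\<lambda>t. (i - 1) * x t) + x" by (auto simp: algebra_simps)
    then show ?case using step2 add[of "\<lambda>t. (i - 1) * x t" x] by (simp add: algebra_simps)
  qed
  show "g (sum f S) = (\<Sum>i\<in>S. g (f i))"
  proof (induction S rule: infinite_finite_induct)
    case (insert x F) then show ?case by (simp only: sum.insert[OF insert(1,2)] add insert(3))
  qed (use g0 in \<open>auto simp: zero_fun_def\<close>)
qed

lemma pair_omega_char:
  fixes \<omega> :: "('r::finite) lvec \<Rightarrow> 'r lvec \<Rightarrow> int"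
  assumes bilin_l: "\<And>x y z. \<omega> (x + y) z = \<omega> x z + \<omega> y z"
  shows "pair (omega_char \<omega> v) w = of_int (\<omega> w v)"
proof -
  have wsum: "w = (\<Sum>j\<in>UNIV. (\<lambda>t. w j * unit_vec j t))"
  proof (rule ext)
    fix x
    have "(\<Sum>j\<in>UNIV. w j * unit_vec j x) = (\<Sum>j\<in>UNIV. if x = j then w j else 0)"
      by (intro sum.cong) (auto simp: unit_vec_def)
    then show "w x = (\<Sum>j\<in>UNIV. (\<lambda>t. w j * unit_vec j t)) x" by (simp add: sum_fun_app)
  qed
  have addg: "\<And>x y. \<omega> (x + y) v = \<omega> x v + \<omega> y v" using bilin_l by simp
  have "\<omega> w v = (\<Sum>j\<in>UNIV. \<omega> (\<lambda>t. w j * unit_vec j t) v)"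
    by (subst wsum) (rule additive_facts(3)[OF addg])
  also have "\<dots> = (\<Sum>j\<in>UNIV. w j * \<omega> (unit_vec j) v)"
    by (simp add: additive_facts(2)[OF addg])
  finally have e: "\<omega> w v = (\<Sum>j\<in>UNIV. w j * \<omega> (unit_vec j) v)" .
  have "pair (omega_char \<omega> v) w = (\<Sum>j\<in>UNIV. of_int (w j * \<omega> (unit_vec j) v))"
    unfolding pair_def lookup_omega_char by (intro sum.cong refl) simp
  also have "\<dots> = of_int (\<omega> w v)" unfolding e of_int_sum ..
  finally show ?thesis .
qed

lemma omega_char_dual:
  assumes bilin_l: "\<And>x y z. \<omega> (x + y) z = \<omega> x z + \<omega> y z"
  shows "omega_char \<omega> v \<in> dual L"
  unfolding dual_def mem_Collect_eq
proof
  fix w show "pair (omega_char \<omega> v) w \<in> \<int>"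
    unfolding pair_omega_char[OF bilin_l] by (rule Ints_of_int)
qed

lemma omega_char_self:
  assumes bilin_l: "\<And>x y z. \<omega> (x + y) z = \<omega> x z + \<omega> y z"
    and skew: "\<And>x y. \<omega> x y = - \<omega> y x"
  shows "pair (omega_char \<omega> v) v = 0"
proof -
  have "\<omega> v v = 0" using skew[of v v] by linarith
  then show ?thesis by (simp add: pair_omega_char[OF bilin_l])
qed

lemma cyclo_zero: "0 \<in> cyclo_field" using cyclo_field.rat[of 0] by simp
lemma cyclo_one: "1 \<in> cyclo_field" using cyclo_field.rat[of 1] by simp
lemma cyclo_sum: "(\<And>i. i \<in> S \<Longrightarrow> f i \<in> cyclo_field) \<Longrightarrow> sum f S \<in> cyclo_field"
  by (induction S rule: infinite_finite_induct) (auto intro: cyclo_zero cyclo_field.add)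

lemma gpoly_add: "p \<in> gpoly N \<Longrightarrow> q \<in> gpoly N \<Longrightarrow> p + q \<in> gpoly N"
  using keys_add[of p q] by (auto simp: gpoly_def lookup_add intro: cyclo_field.add)

lemma gpoly_zero: "0 \<in> gpoly N"
  by (simp add: gpoly_def cyclo_zero)

lemma gpoly_single: "m \<in> N \<Longrightarrow> c \<in> cyclo_field \<Longrightarrow> Poly_Mapping.single m c \<in> gpoly N"
  by (auto simp: gpoly_def lookup_single when_def cyclo_zero)

lemma gpoly_sum: "(\<And>i. i \<in> S \<Longrightarrow> f i \<in> gpoly N) \<Longrightarrow> sum f S \<in> gpoly N"
  by (induction S rule: infinite_finite_induct) (simp_all add: gpoly_zero gpoly_add)

lemma gpoly_mult:
  assumes "\<And>x y. x \<in> N \<Longrightarrow> y \<in> N \<Longrightarrow> x + y \<in> N" "p \<in> gpoly N" "q \<in> gpoly N"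
  shows "p * q \<in> gpoly N"
proof -
  have "p * q = (\<Sum>m\<in>Poly_Mapping.keys p. Poly_Mapping.single m (Poly_Mapping.lookup p m)) *
                (\<Sum>m\<in>Poly_Mapping.keys q. Poly_Mapping.single m (Poly_Mapping.lookup q m))"
    by (simp add: sum_single_keys)
  also have "\<dots> = (\<Sum>m\<in>Poly_Mapping.keys p. \<Sum>m'\<in>Poly_Mapping.keys q.
       Poly_Mapping.single (m + m') (Poly_Mapping.lookup p m * Poly_Mapping.lookup q m'))"
    by (simp add: sum_product mult_single)
  also have "\<dots> \<in> gpoly N"
    using assms(2,3) by (intro gpoly_sum gpoly_single assms(1)) (auto simp: gpoly_def intro: cyclo_field.mult)
  finally show ?thesis .
qed

lemma gpoly_one: "0 \<in> N \<Longrightarrow> 1 \<in> gpoly N"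
  using gpoly_single[of 0 N 1] cyclo_one by (simp add: one_poly_mapping.abs_eq single.abs_eq)

lemma gpoly_power:
  assumes "\<And>x y. x \<in> N \<Longrightarrow> y \<in> N \<Longrightarrow> x + y \<in> N" "0 \<in> N" "p \<in> gpoly N"
  shows "p ^ k \<in> gpoly N"
proof (induction k)
  case 0 then show ?case using gpoly_one[OF assms(2)] by simp
next
  case (Suc k) then show ?case using gpoly_mult[OF assms(1) assms(3) Suc] by simp
qed

lemma gpoly_mono: "N1 \<subseteq> N2 \<Longrightarrow> gpoly N1 \<subseteq> gpoly N2"
  by (auto simp: gpoly_def)

lemma keys_mult_sub:
  assumes "\<And>x y. x \<in> N \<Longrightarrow> y \<in> N \<Longrightarrow> x + y \<in> N" "Poly_Mapping.keys p \<subseteq> N" "Poly_Mapping.keys q \<subseteq> N"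
  shows "Poly_Mapping.keys (p * q) \<subseteq> N"
  using keys_mult[of p q] assms by blast

lemma keys_power_sub:
  assumes "\<And>x y. x \<in> N \<Longrightarrow> y \<in> N \<Longrightarrow> x + y \<in> N" "0 \<in> N" "Poly_Mapping.keys p \<subseteq> N"
  shows "Poly_Mapping.keys (p ^ k) \<subseteq> N"
proof (induction k)
  case 0 then show ?case using assms(2) by simp
next
  case (Suc k) then show ?case using keys_mult_sub[OF assms(1) assms(3) Suc] by simp
qed

lemma keys_diff_sub: "Poly_Mapping.keys (p::'a \<Rightarrow>\<^sub>0 'b::ab_group_add) \<subseteq> N \<Longrightarrow> Poly_Mapping.keys q \<subseteq> N \<Longrightarrow> Poly_Mapping.keys (p - q) \<subseteq> N"
  using keys_add[of p "-q"] by auto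




definition Aa :: "('r::{finite,linorder}) expo \<Rightarrow> 'r galg" where
  "Aa a = 1 + Poly_Mapping.single a 1"

definition UU :: "('r::{finite,linorder}) expo \<Rightarrow> 'r galg fract" where
  "UU a = Fract (Aa a) 1"

lemma Aa_nz: "Aa a \<noteq> 0"
proof
  assume "Aa a = 0"
  then have "Poly_Mapping.lookup (Aa a) 0 = 0" by simp
  then show False by (auto simp: Aa_def lookup_add lookup_one lookup_single when_def split: if_splits)
qed

lemma Fract1_eq0: "Fract x 1 = 0 \<longleftrightarrow> (x::'a::idom) = 0"
  by (simp add: Zero_fract_def eq_fract)

lemma UU_nz: "UU a \<noteq> 0"
  using Aa_nz by (simp add: UU_def Fract1_eq0)

lemma Fract_add1: "Fract (x + y) 1 = Fract x 1 + Fract (y::'a::idom) 1"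
  by simp

lemma Fract_sum1: "Fract (sum f S) 1 = (\<Sum>i\<in>S. Fract (f i) (1::'a::idom))"
  by (induction S rule: infinite_finite_induct) (simp_all add: Zero_fract_def Fract_add1 del: add_fract)

lemma Fract_mult1: "Fract (x * y) 1 = Fract x 1 * Fract (y::'a::idom) 1"
  by simp

lemma Fract_pow1: "Fract (x ^ k) 1 = (Fract (x::'a::idom) 1) ^ k"
proof (induction k)
  case (Suc k) then show ?case by (simp only: power_Suc Fract_mult1)
qed (simp add: One_fract_def)

definition FE :: "(('r::{finite,linorder}) expo \<Rightarrow> 'r galg fract) \<Rightarrow> 'r expo \<Rightarrow> complex \<Rightarrow> 'r galg fract" where
  "FE E m c = Fract (Poly_Mapping.single m c) 1 * E m"

lemma FE_zero: "FE E m 0 = 0"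
  by (simp add: FE_def Zero_fract_def)

lemma FE_add: "FE E m (c + d) = FE E m c + FE E m d"
  by (simp add: FE_def single_add distrib_right Fract_add1 del: add_fract)

lemma FE_mult: "E (m + m') = E m * E m' \<Longrightarrow> FE E (m + m') (c * d) = FE E m c * FE E m' d"
  by (simp add: FE_def mult_single[symmetric])

definition good :: "('r::{finite,linorder}) expo set \<Rightarrow> 'r expo \<Rightarrow> 'r lvec \<Rightarrow> bool" where
  "good N a v \<longleftrightarrow> 0 \<in> N \<and> (\<forall>x\<in>N. \<forall>y\<in>N. x + y \<in> N) \<and> a \<in> N \<and> pair a v = 0 \<and> (\<forall>m\<in>N. pair m v \<in> \<int>)"

lemma good_D:
  assumes "good N a v"
  shows "0 \<in> N" "\<And>x y. x \<in> N \<Longrightarrow> y \<in> N \<Longrightarrow> x + y \<in> N" "a \<in> N" "pair a v = 0"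
    "\<And>m. m \<in> N \<Longrightarrow> pair m v \<in> \<int>"
  using assms by (auto simp: good_def)

lemma floor_pair_add:
  assumes "good N a v" "m \<in> N" "m' \<in> N"
  shows "\<lfloor>pair (m + m') v\<rfloor> = \<lfloor>pair m v\<rfloor> + \<lfloor>pair m' v\<rfloor>"
proof -
  obtain i where i: "pair m v = of_int i" using good_D(5)[OF assms(1,2)] by (auto elim: Ints_cases)
  obtain j where j: "pair m' v = of_int j" using good_D(5)[OF assms(1,3)] by (auto elim: Ints_cases)
  show ?thesis by (simp add: pair_add i j)
qed

definition Emu :: "('r::{finite,linorder}) expo \<Rightarrow> 'r lvec \<Rightarrow> 'r expo \<Rightarrow> 'r galg fract" where
  "Emu a v m = UU a powi (- \<lfloor>pair m v\<rfloor>)"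
definition Enu :: "('r::{finite,linorder}) expo \<Rightarrow> 'r lvec \<Rightarrow> 'r expo \<Rightarrow> 'r galg fract" where
  "Enu a v m = UU a powi (\<lfloor>pair m v\<rfloor>)"

definition nu_pol :: "('r::{finite,linorder}) expo \<Rightarrow> 'r lvec \<Rightarrow> 'r galg \<Rightarrow> 'r galg fract" where
  "nu_pol a v = Phi (FE (Enu a v))"

lemma mu_pol_Phi: "mu_pol a v = Phi (FE (Emu a v))"
  by (rule ext) (simp add: mu_pol_def Phi_def FE_def Emu_def UU_def Aa_def)

lemma Emu_mult: "good N a v \<Longrightarrow> m \<in> N \<Longrightarrow> m' \<in> N \<Longrightarrow> Emu a v (m + m') = Emu a v m * Emu a v m'"
  unfolding Emu_def floor_pair_add[of N a v m m'] minus_add_distrib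
  by (rule power_int_add) (simp add: UU_nz)

lemma Enu_mult: "good N a v \<Longrightarrow> m \<in> N \<Longrightarrow> m' \<in> N \<Longrightarrow> Enu a v (m + m') = Enu a v m * Enu a v m'"
  unfolding Enu_def floor_pair_add[of N a v m m']
  by (rule power_int_add) (simp add: UU_nz)

lemma mu_pol_add: "mu_pol a v (p + q) = mu_pol a v p + mu_pol a v q"
  unfolding mu_pol_Phi by (rule Phi_add) (simp_all add: FE_zero FE_add)
lemma mu_pol_diff: "mu_pol a v (p - q) = mu_pol a v p - mu_pol a v q"
  unfolding mu_pol_Phi by (rule Phi_minus) (simp_all add: FE_zero FE_add)
lemma mu_pol_single: "mu_pol a v (Poly_Mapping.single m c) = Fract (Poly_Mapping.single m c) 1 * Emu a v m"
  unfolding mu_pol_Phi by (subst Phi_single) (simp_all add: FE_zero FE_def fract_collapse)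
lemma mu_pol_mult:
  assumes "good N a v" "Poly_Mapping.keys p \<subseteq> N" "Poly_Mapping.keys q \<subseteq> N"
  shows "mu_pol a v (p * q) = mu_pol a v p * mu_pol a v q"
  unfolding mu_pol_Phi
  by (rule Phi_mult[where M=N]) (use assms in \<open>simp_all add: FE_zero FE_add FE_mult Emu_mult\<close>)

lemma nu_pol_add: "nu_pol a v (p + q) = nu_pol a v p + nu_pol a v q"
  unfolding nu_pol_def by (rule Phi_add) (simp_all add: FE_zero FE_add)
lemma nu_pol_zero: "nu_pol a v 0 = 0"
  unfolding nu_pol_def by (rule Phi_zero)
lemma nu_pol_single: "nu_pol a v (Poly_Mapping.single m c) = Fract (Poly_Mapping.single m c) 1 * Enu a v m"
  unfolding nu_pol_def by (subst Phi_single) (simp_all add: FE_zero FE_def fract_collapse)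
lemma nu_pol_sum: "nu_pol a v (sum f S) = (\<Sum>i\<in>S. nu_pol a v (f i))"
  unfolding nu_pol_def by (rule Phi_sum) (simp_all add: FE_zero FE_add)
lemma nu_pol_mult:
  assumes "good N a v" "Poly_Mapping.keys p \<subseteq> N" "Poly_Mapping.keys q \<subseteq> N"
  shows "nu_pol a v (p * q) = nu_pol a v p * nu_pol a v q"
  unfolding nu_pol_def
  by (rule Phi_mult[where M=N]) (use assms in \<open>simp_all add: FE_zero FE_add FE_mult Enu_mult\<close>)

lemma nu_pol_one: "nu_pol a v 1 = 1"
  unfolding nu_pol_def by (rule Phi_one) (simp_all add: FE_zero FE_def Enu_def fract_collapse)

lemma keys_Aa: "good N a v \<Longrightarrow> Poly_Mapping.keys (Aa a) \<subseteq> N"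
  using keys_add[of 1 "Poly_Mapping.single a (1::complex)"] good_D[of N a v] by (auto simp: Aa_def)

lemma gpoly_Aa: "good N a v \<Longrightarrow> Aa a \<in> gpoly N"
  unfolding Aa_def using good_D[of N a v]
  by (intro gpoly_add gpoly_one gpoly_single cyclo_one) auto

lemma nu_Aa: "good N a v \<Longrightarrow> nu_pol a v (Aa a) = UU a"
  unfolding Aa_def UU_def nu_pol_add nu_pol_one nu_pol_single
  by (simp add: Enu_def good_def Fract_add1 fract_collapse del: add_fract)

lemma nu_pol_pow:
  assumes "good N a v" "Poly_Mapping.keys p \<subseteq> N"
  shows "nu_pol a v (p ^ k) = nu_pol a v p ^ k"
proof (induction k)
  case 0 then show ?case by (simp add: nu_pol_one)
next
  case (Suc k)
  have "nu_pol a v (p ^ Suc k) = nu_pol a v p * nu_pol a v (p ^ k)"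
    using nu_pol_mult[OF assms(1,2) keys_power_sub[OF good_D(2)[OF assms(1)] good_D(1)[OF assms(1)] assms(2)]]
    by simp
  then show ?case using Suc by simp
qed




lemma mu_pol_repr:
  assumes g: "good N a v" and kp: "Poly_Mapping.keys p \<subseteq> N"
  obtains P n where "Poly_Mapping.keys P \<subseteq> N" "p \<in> gpoly N \<Longrightarrow> P \<in> gpoly N"
    "mu_pol a v p = Fract P (Aa a ^ n)" "P = 0 \<Longrightarrow> p = 0"
proof -
  note gd = good_D[OF g]
  define k where "k m = \<lfloor>pair m v\<rfloor>" for m
  define n where "n = (\<Sum>m\<in>Poly_Mapping.keys p. nat \<bar>k m\<bar>)"
  have kn: "k m \<le> int n" if "m \<in> Poly_Mapping.keys p" for m
  proof -
    have "nat \<bar>k m\<bar> \<le> n" unfolding n_def by (rule member_le_sum) (use that in auto)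
    then show ?thesis by linarith
  qed
  define j where "j m = nat (int n - k m)" for m
  have jk: "int (j m) = int n - k m" if "m \<in> Poly_Mapping.keys p" for m
    using kn[OF that] by (simp add: j_def)
  define P where "P = (\<Sum>m\<in>Poly_Mapping.keys p. Poly_Mapping.single m (Poly_Mapping.lookup p m) * Aa a ^ j m)"
  have kA: "Poly_Mapping.keys (Aa a ^ i) \<subseteq> N" for i
    by (rule keys_power_sub[OF gd(2) gd(1) keys_Aa[OF g]])
  have ks: "Poly_Mapping.keys (Poly_Mapping.single m c) \<subseteq> N" if "m \<in> Poly_Mapping.keys p" for m c
    using that kp by auto
  have kP: "Poly_Mapping.keys P \<subseteq> N"
  proof -
    have "Poly_Mapping.keys P \<subseteq> (\<Union>m\<in>Poly_Mapping.keys p. Poly_Mapping.keys (Poly_Mapping.single m (Poly_Mapping.lookup p m) * Aa a ^ j m))"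
      unfolding P_def by (rule keys_sum)
    also have "\<dots> \<subseteq> N"
      using keys_mult_sub[OF gd(2) ks kA] by blast
    finally show ?thesis .
  qed
  have gP: "P \<in> gpoly N" if "p \<in> gpoly N"
    unfolding P_def
  proof (intro gpoly_sum gpoly_mult[OF gd(2)] gpoly_power[OF gd(2) gd(1)] gpoly_Aa[OF g] gpoly_single)
    fix m assume "m \<in> Poly_Mapping.keys p"
    then show "m \<in> N" "Poly_Mapping.lookup p m \<in> cyclo_field" using that kp by (auto simp: gpoly_def)
  qed
  have pw: "UU a ^ n * Emu a v m = UU a ^ j m" if "m \<in> Poly_Mapping.keys p" for m
  proof -
    have "UU a ^ n * Emu a v m = UU a powi (int n + - k m)"
      unfolding Emu_def k_def by (subst power_int_add) (simp_all add: UU_nz)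
    also have "\<dots> = UU a powi int (j m)" using jk[OF that] by simp
    finally show ?thesis by simp
  qed
  have pw2: "Enu a v m * UU a ^ j m = UU a ^ n" if "m \<in> Poly_Mapping.keys p" for m
  proof -
    have "Enu a v m * UU a ^ j m = UU a powi (k m + int (j m))"
      unfolding Enu_def k_def by (subst power_int_add) (simp_all add: UU_nz)
    also have "\<dots> = UU a powi int n" using jk[OF that] by simp
    finally show ?thesis by simp
  qed
  have eq1: "Fract P 1 = UU a ^ n * mu_pol a v p"
  proof -
    have "Fract P 1 = (\<Sum>m\<in>Poly_Mapping.keys p. Fract (Poly_Mapping.single m (Poly_Mapping.lookup p m)) 1 * UU a ^ j m)"
      unfolding P_def Fract_sum1 Fract_mult1 Fract_pow1 UU_def ..
    also have "\<dots> = (\<Sum>m\<in>Poly_Mapping.keys p. UU a ^ n * (Fract (Poly_Mapping.single m (Poly_Mapping.lookup p m)) 1 * Emu a v m))"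
      by (intro sum.cong refl) (simp add: pw[symmetric] ac_simps)
    also have "\<dots> = UU a ^ n * mu_pol a v p"
      by (simp add: mu_pol_Phi Phi_def FE_def sum_distrib_left)
    finally show ?thesis .
  qed
  have eq2: "nu_pol a v P = UU a ^ n * Fract p 1"
  proof -
    have "nu_pol a v P = (\<Sum>m\<in>Poly_Mapping.keys p. nu_pol a v (Poly_Mapping.single m (Poly_Mapping.lookup p m)) * nu_pol a v (Aa a ^ j m))"
      unfolding P_def nu_pol_sum by (intro sum.cong refl nu_pol_mult[OF g ks kA])
    also have "\<dots> = (\<Sum>m\<in>Poly_Mapping.keys p. UU a ^ n * Fract (Poly_Mapping.single m (Poly_Mapping.lookup p m)) 1)"
      by (intro sum.cong refl)
         (simp add: nu_pol_single nu_pol_pow[OF g keys_Aa[OF g]] nu_Aa[OF g] pw2[symmetric] ac_simps)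
    also have "\<dots> = UU a ^ n * Fract p 1"
      by (simp add: sum_distrib_left[symmetric] Fract_sum1[symmetric] sum_single_keys)
    finally show ?thesis .
  qed
  have eq3: "mu_pol a v p = Fract P (Aa a ^ n)"
  proof -
    have "UU a ^ n \<noteq> 0" by (simp add: UU_nz)
    then have "mu_pol a v p = Fract P 1 / UU a ^ n" using eq1 by (simp add: field_simps)
    also have "\<dots> = Fract P (Aa a ^ n)" by (simp add: UU_def Fract_pow1[symmetric])
    finally show ?thesis .
  qed
  have z: "p = 0" if "P = 0"
  proof -
    have "UU a ^ n * Fract p 1 = 0" using eq2 that by (simp add: nu_pol_zero)
    then show ?thesis by (simp add: UU_nz Fract1_eq0)
  qed
  show ?thesis by (rule that[OF kP gP eq3 z])
qed

lemma Fract_eq0: "d \<noteq> 0 \<Longrightarrow> Fract x d = 0 \<longleftrightarrow> (x::'a::idom) = 0"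
  by (simp add: Zero_fract_def eq_fract)

lemma mu_pol_nz:
  assumes "good N a v" "Poly_Mapping.keys p \<subseteq> N" "p \<noteq> 0"
  shows "mu_pol a v p \<noteq> 0"
proof -
  obtain P n where "mu_pol a v p = Fract P (Aa a ^ n)" "P = 0 \<Longrightarrow> p = 0"
    using mu_pol_repr[OF assms(1,2)] by metis
  then show ?thesis using assms(3) by (auto simp: Fract_eq0 Aa_nz)
qed

lemma mu_pol_inj:
  assumes "good N a v" "Poly_Mapping.keys p \<subseteq> N" "Poly_Mapping.keys q \<subseteq> N"
    "mu_pol a v p = mu_pol a v q"
  shows "p = q"
proof -
  have "mu_pol a v (p - q) = 0" using assms(4) by (simp add: mu_pol_diff)
  then show ?thesis using mu_pol_nz[OF assms(1) keys_diff_sub[OF assms(2,3)]] by auto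
qed

lemma gpoly_keys: "p \<in> gpoly N \<Longrightarrow> Poly_Mapping.keys p \<subseteq> N"
  by (simp add: gpoly_def)

lemma mu_pol_welldef:
  assumes g: "good N a v" and k: "Poly_Mapping.keys p \<subseteq> N" "Poly_Mapping.keys q \<subseteq> N"
    "Poly_Mapping.keys p' \<subseteq> N" "Poly_Mapping.keys q' \<subseteq> N"
    and nz: "q \<noteq> 0" "q' \<noteq> 0" and eq: "Fract p q = Fract p' q'"
  shows "mu_pol a v p / mu_pol a v q = mu_pol a v p' / mu_pol a v q'"
proof -
  have e: "p * q' = p' * q" using eq nz by (simp add: eq_fract)
  have "mu_pol a v p * mu_pol a v q' = mu_pol a v p' * mu_pol a v q"
    using e mu_pol_mult[OF g k(1,4)] mu_pol_mult[OF g k(3,2)] by simp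
  moreover have "mu_pol a v q \<noteq> 0" "mu_pol a v q' \<noteq> 0"
    using mu_pol_nz[OF g k(2) nz(1)] mu_pol_nz[OF g k(4) nz(2)] by auto
  ultimately show ?thesis by (simp add: field_simps)
qed

lemma mu_Fract:
  assumes g: "good N a v" and pq: "p \<in> gpoly N" "q \<in> gpoly N" "q \<noteq> 0"
  shows "mu N a v (Fract p q) = mu_pol a v p / mu_pol a v q"
proof -
  let ?P = "\<lambda>(p', q'). p' \<in> gpoly N \<and> q' \<in> gpoly N \<and> q' \<noteq> 0 \<and> Fract p q = Fract p' q'"
  have ex: "\<exists>z. ?P z" using pq by (intro exI[of _ "(p, q)"]) auto
  obtain p' q' where z: "(SOME z. ?P z) = (p', q')" by (cases "SOME z. ?P z") auto
  have "?P (p', q')" using someI_ex[OF ex] unfolding z .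
  then have h: "p' \<in> gpoly N" "q' \<in> gpoly N" "q' \<noteq> 0" "Fract p q = Fract p' q'" by auto
  have "mu N a v (Fract p q) = mu_pol a v p' / mu_pol a v q'"
    unfolding mu_def Let_def z by simp
  also have "\<dots> = mu_pol a v p / mu_pol a v q"
    using mu_pol_welldef[OF g gpoly_keys[OF h(1)] gpoly_keys[OF h(2)] gpoly_keys[OF pq(1)] gpoly_keys[OF pq(2)] h(3) pq(3) h(4)[symmetric]] .
  finally show ?thesis .
qed




lemma fracfield_mono: "N1 \<subseteq> N2 \<Longrightarrow> fracfield N1 \<subseteq> fracfield N2"
  using gpoly_mono[of N1 N2] by (auto simp: fracfield_def)

lemma fracfieldE:
  assumes "x \<in> fracfield N"
  obtains p q where "p \<in> gpoly N" "q \<in> gpoly N" "q \<noteq> 0" "x = Fract p q"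
  using assms by (auto simp: fracfield_def)

lemma fracfieldI: "p \<in> gpoly N \<Longrightarrow> q \<in> gpoly N \<Longrightarrow> q \<noteq> 0 \<Longrightarrow> Fract p q \<in> fracfield N"
  by (auto simp: fracfield_def)

lemma mu_fracfield:
  assumes g: "good N a v" and x: "x \<in> fracfield N"
  shows "mu N a v x \<in> fracfield N"
proof -
  note gd = good_D[OF g]
  obtain p q where pq: "p \<in> gpoly N" "q \<in> gpoly N" "q \<noteq> 0" "x = Fract p q" using x by (rule fracfieldE)
  obtain P n where P: "P \<in> gpoly N" "mu_pol a v p = Fract P (Aa a ^ n)"
    using mu_pol_repr[OF g gpoly_keys[OF pq(1)]] pq(1) by metis
  obtain Q n' where Q: "Q \<in> gpoly N" "mu_pol a v q = Fract Q (Aa a ^ n')" "Q = 0 \<Longrightarrow> q = 0"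
    using mu_pol_repr[OF g gpoly_keys[OF pq(2)]] pq(2) by metis
  have Qnz: "Q \<noteq> 0" using Q(3) pq(3) by auto
  have "mu N a v x = Fract (P * Aa a ^ n') (Aa a ^ n * Q)"
    using mu_Fract[OF g pq(1-3)] pq(4) P(2) Q(2) by simp
  also have "\<dots> \<in> fracfield N"
  proof (rule fracfieldI)
    show "P * Aa a ^ n' \<in> gpoly N"
      by (rule gpoly_mult[OF gd(2) P(1) gpoly_power[OF gd(2) gd(1) gpoly_Aa[OF g]]])
    show "Aa a ^ n * Q \<in> gpoly N"
      by (rule gpoly_mult[OF gd(2) gpoly_power[OF gd(2) gd(1) gpoly_Aa[OF g]] Q(1)])
    show "Aa a ^ n * Q \<noteq> 0" using Aa_nz[of a] Qnz by simp
  qed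
  finally show ?thesis .
qed

lemma mu_inj:
  assumes g: "good N a v" and x: "x \<in> fracfield N" and y: "y \<in> fracfield N"
    and e: "mu N a v x = mu N a v y"
  shows "x = y"
proof -
  note gd = good_D[OF g]
  obtain p q where pq: "p \<in> gpoly N" "q \<in> gpoly N" "q \<noteq> 0" "x = Fract p q" using x by (rule fracfieldE)
  obtain p' q' where pq': "p' \<in> gpoly N" "q' \<in> gpoly N" "q' \<noteq> 0" "y = Fract p' q'" using y by (rule fracfieldE)
  have nz: "mu_pol a v q \<noteq> 0" "mu_pol a v q' \<noteq> 0"
    using mu_pol_nz[OF g gpoly_keys[OF pq(2)] pq(3)] mu_pol_nz[OF g gpoly_keys[OF pq'(2)] pq'(3)] by auto
  have "mu_pol a v p / mu_pol a v q = mu_pol a v p' / mu_pol a v q'"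
    using e mu_Fract[OF g pq(1-3)] mu_Fract[OF g pq'(1-3)] pq(4) pq'(4) by simp
  then have "mu_pol a v p * mu_pol a v q' = mu_pol a v p' * mu_pol a v q"
    using nz by (simp add: field_simps)
  then have "mu_pol a v (p * q') = mu_pol a v (p' * q)"
    using mu_pol_mult[OF g gpoly_keys[OF pq(1)] gpoly_keys[OF pq'(2)]]
      mu_pol_mult[OF g gpoly_keys[OF pq'(1)] gpoly_keys[OF pq(2)]] by simp
  moreover have "Poly_Mapping.keys (p * q') \<subseteq> N"
    by (rule keys_mult_sub[OF gd(2)]) (simp_all add: gpoly_keys pq pq')
  moreover have "Poly_Mapping.keys (p' * q) \<subseteq> N"
    by (rule keys_mult_sub[OF gd(2)]) (simp_all add: gpoly_keys pq pq')
  ultimately have "p * q' = p' * q"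
    using mu_pol_inj[OF g] by blast
  then show ?thesis using pq pq' by (simp add: eq_fract)
qed

lemma mu_mono:
  assumes g1: "good N1 a v" and g2: "good N2 a v" and sub: "N1 \<subseteq> N2" and x: "x \<in> fracfield N1"
  shows "mu N1 a v x = mu N2 a v x"
proof -
  obtain p q where pq: "p \<in> gpoly N1" "q \<in> gpoly N1" "q \<noteq> 0" "x = Fract p q" using x by (rule fracfieldE)
  have pq2: "p \<in> gpoly N2" "q \<in> gpoly N2" using pq gpoly_mono[OF sub] by auto
  show ?thesis using mu_Fract[OF g1 pq(1-3)] mu_Fract[OF g2 pq2 pq(3)] pq(4) by simp
qed

lemma iter_fracfield: "good N a v \<Longrightarrow> x \<in> fracfield N \<Longrightarrow> (mu N a v ^^ k) x \<in> fracfield N"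
  by (induction k) (simp_all add: mu_fracfield)

lemma iter_inj: "good N a v \<Longrightarrow> x \<in> fracfield N \<Longrightarrow> y \<in> fracfield N \<Longrightarrow>
    (mu N a v ^^ k) x = (mu N a v ^^ k) y \<Longrightarrow> x = y"
proof (induction k)
  case (Suc k)
  then show ?case using mu_inj[OF Suc.prems(1) iter_fracfield iter_fracfield] by simp
qed simp

lemma iter_mono:
  assumes "good N1 a v" "good N2 a v" "N1 \<subseteq> N2" "x \<in> fracfield N1"
  shows "(mu N1 a v ^^ k) x = (mu N2 a v ^^ k) x"
proof (induction k)
  case (Suc k)
  have "(mu N1 a v ^^ Suc k) x = mu N2 a v ((mu N1 a v ^^ k) x)"
    using mu_mono[OF assms(1-3) iter_fracfield[OF assms(1,4), of k]] by simp
  then show ?case using Suc.IH by simp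
qed simp




definition chi :: "('r::{finite,linorder}) lvec \<Rightarrow> 'r expo \<Rightarrow> complex" where
  "chi n m = cis (2 * pi * of_rat (pair m n))"

definition Fact :: "('r::{finite,linorder}) lvec \<Rightarrow> 'r expo \<Rightarrow> complex \<Rightarrow> 'r galg" where
  "Fact n m c = Poly_Mapping.single m (chi n m * c)"

lemma act_Phi: "act n = Phi (Fact n)"
  by (rule ext) (simp add: act_def Phi_def Fact_def chi_def)

lemma chi_add: "chi n (m + m') = chi n m * chi n m'"
  by (simp add: chi_def pair_add of_rat_add distrib_left cis_mult)

lemma chi_nz: "chi n m \<noteq> 0"
  by (simp add: chi_def)

lemma chi_zero: "chi n 0 = 1"
  by (simp add: chi_def)

lemma Fact_zero: "Fact n m 0 = 0" by (simp add: Fact_def)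
lemma Fact_add: "Fact n m (c + d) = Fact n m c + Fact n m d" by (simp add: Fact_def distrib_left single_add)
lemma Fact_mult: "Fact n (m + m') (c * d) = Fact n m c * Fact n m' d"
  by (simp add: Fact_def mult_single chi_add ac_simps)

lemma act_mult: "act n (p * q) = act n p * act n q"
  unfolding act_Phi by (rule Phi_mult[where M=UNIV]) (simp_all add: Fact_zero Fact_add Fact_mult)
lemma act_add: "act n (p + q) = act n p + act n q"
  unfolding act_Phi by (rule Phi_add) (simp_all add: Fact_zero Fact_add)
lemma act_zero: "act n 0 = 0"
  unfolding act_Phi by (rule Phi_zero)
lemma act_one: "act n 1 = 1"
  unfolding act_Phi by (rule Phi_one) (simp_all add: Fact_zero Fact_def chi_zero)
lemma act_single: "act n (Poly_Mapping.single m c) = Poly_Mapping.single m (chi n m * c)"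
  unfolding act_Phi by (subst Phi_single) (simp_all add: Fact_zero Fact_def)

lemma lookup_act: "Poly_Mapping.lookup (act n f) m = chi n m * Poly_Mapping.lookup f m"
proof -
  have "Poly_Mapping.lookup (act n f) m = (\<Sum>k\<in>Poly_Mapping.keys f. (chi n k * Poly_Mapping.lookup f k when k = m))"
    by (simp add: act_Phi Phi_def Fact_def lookup_sum lookup_single)
  also have "\<dots> = chi n m * Poly_Mapping.lookup f m"
    by (cases "m \<in> Poly_Mapping.keys f") (simp_all add: when_def in_keys_iff)
  finally show ?thesis .
qed

lemma keys_act: "Poly_Mapping.keys (act n f) = Poly_Mapping.keys f"
  by (auto simp: in_keys_iff lookup_act chi_nz)

lemma act_nz: "f \<noteq> 0 \<Longrightarrow> act n f \<noteq> 0"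
  by (metis keys_act keys_eq_empty)

lemma chi_cyclo: "chi n m \<in> cyclo_field"
  unfolding chi_def by (rule cyclo_field.root)

lemma act_gpoly: "p \<in> gpoly N \<Longrightarrow> act n p \<in> gpoly N"
  by (auto simp: gpoly_def keys_act lookup_act intro: cyclo_field.mult chi_cyclo)

lemma chi_int: "pair m n \<in> \<int> \<Longrightarrow> chi n m = 1"
  by (auto simp: chi_def elim!: Ints_cases)

lemma act_triv: "Poly_Mapping.keys f \<subseteq> dual UNIV \<Longrightarrow> act n f = f"
  by (rule poly_mapping_eqI) (auto simp: lookup_act dual_def chi_int in_keys_iff)

lemma chi_one_int: "chi n m = 1 \<Longrightarrow> pair m n \<in> \<int>"
proof -
  assume "chi n m = 1"
  then have "cos (2 * pi * of_rat (pair m n)) = 1"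
    unfolding chi_def by (metis cis.sel(1) one_complex.sel(1))
  then obtain i :: int where "2 * pi * of_rat (pair m n) = of_int i * 2 * pi"
    by (auto simp: cos_one_2pi_int)
  then have "(of_rat (pair m n) :: real) = of_rat (of_int i)" by simp
  then have "pair m n = of_int i" by (simp only: of_rat_eq_iff)
  then show ?thesis by simp
qed

lemma act_triv_conv:
  assumes "\<And>n. act n f = f"
  shows "Poly_Mapping.keys f \<subseteq> dual UNIV"
proof
  fix m assume m: "m \<in> Poly_Mapping.keys f"
  have "chi n m = 1" for n
  proof -
    have "chi n m * Poly_Mapping.lookup f m = Poly_Mapping.lookup f m"
      using assms[of n] lookup_act[of n f m] by simp
    then show ?thesis using m by (simp add: in_keys_iff)
  qed
  then show "m \<in> dual UNIV" by (auto simp: dual_def chi_one_int)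
qed

lemma act_fract_Fract:
  assumes "q \<noteq> 0"
  shows "act_fract n (Fract p q) = Fract (act n p) (act n q)"
proof -
  let ?P = "\<lambda>(p', q'). q' \<noteq> 0 \<and> Fract p q = Fract p' q'"
  have ex: "\<exists>z. ?P z" using assms by (intro exI[of _ "(p, q)"]) auto
  obtain p' q' where z: "(SOME z. ?P z) = (p', q')" by (cases "SOME z. ?P z") auto
  have "?P (p', q')" using someI_ex[OF ex] unfolding z .
  then have h: "q' \<noteq> 0" "Fract p q = Fract p' q'" by auto
  have "p' * q = p * q'" using h assms by (simp add: eq_fract)
  then have "act n p' * act n q = act n p * act n q'" by (simp add: act_mult[symmetric])
  then have "Fract (act n p') (act n q') = Fract (act n p) (act n q)"
    using act_nz[OF h(1)] act_nz[OF assms] by (simp add: eq_fract)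
  then show ?thesis unfolding act_fract_def Let_def z by simp
qed

lemma act_fract_mult: "act_fract n (x * y) = act_fract n x * act_fract n y"
  by (cases x, cases y) (simp add: act_fract_Fract act_mult)

lemma act_fract_add: "act_fract n (x + y) = act_fract n x + act_fract n y"
  by (cases x, cases y) (simp add: act_fract_Fract act_mult act_add act_nz)

lemma act_fract_one: "act_fract n 1 = 1"
  by (simp add: One_fract_def act_fract_Fract act_one)

lemma act_fract_zero: "act_fract n 0 = 0"
  by (simp add: Zero_fract_def act_fract_Fract act_zero act_one)

lemma act_fract_inverse: "act_fract n (inverse x) = inverse (act_fract n x)"
proof (cases "x = 0")
  case True then show ?thesis by (simp add: act_fract_zero)
next
  case False
  have "act_fract n x * act_fract n (inverse x) = 1"
    using act_fract_mult[of n x "inverse x"] False by (simp add: act_fract_one)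
  then show ?thesis by (metis inverse_unique)
qed

lemma act_fract_divide: "act_fract n (x / y) = act_fract n x / act_fract n y"
  by (simp add: divide_inverse act_fract_mult act_fract_inverse)

lemma act_fract_power: "act_fract n (x ^ k) = act_fract n x ^ k"
  by (induction k) (simp_all add: act_fract_one act_fract_mult)

lemma act_fract_powi: "act_fract n (x powi k) = act_fract n x powi k"
  by (simp add: power_int_def act_fract_power act_fract_inverse)

lemma act_fract_sum: "act_fract n (sum f S) = (\<Sum>i\<in>S. act_fract n (f i))"
  by (induction S rule: infinite_finite_induct) (simp_all add: act_fract_zero act_fract_add)

lemma act_fract_Fract1: "act_fract n (Fract p 1) = Fract (act n p) 1"
  by (simp add: act_fract_Fract act_one)

lemma act_fract_UU: "a \<in> dual UNIV \<Longrightarrow> act_fract n (UU a) = UU a"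
proof -
  assume a: "a \<in> dual UNIV"
  have "Poly_Mapping.keys (Aa a) \<subseteq> dual UNIV"
    using keys_add[of 1 "Poly_Mapping.single a (1::complex)"] a dual_zero by (auto simp: Aa_def)
  then show ?thesis by (simp add: UU_def act_fract_Fract1 act_triv)
qed

lemma act_fract_mu_pol:
  assumes a: "a \<in> dual UNIV"
  shows "act_fract n (mu_pol a v p) = mu_pol a v (act n p)"
proof -
  have "act_fract n (mu_pol a v p) = (\<Sum>m\<in>Poly_Mapping.keys p. Fract (Poly_Mapping.single m (chi n m * Poly_Mapping.lookup p m)) 1 * Emu a v m)"
    by (simp add: mu_pol_Phi Phi_def FE_def act_fract_sum act_fract_mult act_fract_Fract1 act_single
        Emu_def act_fract_powi act_fract_UU[OF a])
  also have "\<dots> = mu_pol a v (act n p)"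
    by (simp add: mu_pol_Phi Phi_def FE_def keys_act lookup_act)
  finally show ?thesis .
qed

lemma act_fract_fracfield: "x \<in> fracfield N \<Longrightarrow> act_fract n x \<in> fracfield N"
  by (auto elim!: fracfieldE intro!: fracfieldI act_gpoly act_nz simp: act_fract_Fract)

lemma act_fract_mu:
  assumes g: "good N a v" and a: "a \<in> dual UNIV" and x: "x \<in> fracfield N"
  shows "act_fract n (mu N a v x) = mu N a v (act_fract n x)"
proof -
  obtain p q where pq: "p \<in> gpoly N" "q \<in> gpoly N" "q \<noteq> 0" "x = Fract p q" using x by (rule fracfieldE)
  have "act_fract n (mu N a v x) = mu_pol a v (act n p) / mu_pol a v (act n q)"
    using mu_Fract[OF g pq(1-3)] pq(4) by (simp add: act_fract_divide act_fract_mu_pol[OF a])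
  also have "\<dots> = mu N a v (Fract (act n p) (act n q))"
    by (rule mu_Fract[OF g act_gpoly[OF pq(1)] act_gpoly[OF pq(2)] act_nz[OF pq(3)], symmetric])
  also have "\<dots> = mu N a v (act_fract n x)" using pq by (simp add: act_fract_Fract)
  finally show ?thesis .
qed

lemma iter_act:
  assumes g: "good N a v" and a: "a \<in> dual UNIV" and x: "x \<in> fracfield N"
  shows "act_fract n ((mu N a v ^^ k) x) = (mu N a v ^^ k) (act_fract n x)"
proof (induction k)
  case (Suc k)
  then show ?case using act_fract_mu[OF g a iter_fracfield[OF g x, of k]] by simp
qed simp




lemma gpolyF_fracfield: "0 \<in> N \<Longrightarrow> x \<in> gpolyF N \<Longrightarrow> x \<in> fracfield N"
  by (auto simp: gpolyF_def intro!: fracfieldI gpoly_one)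

lemma gpolyF_mono: "N1 \<subseteq> N2 \<Longrightarrow> gpolyF N1 \<subseteq> gpolyF N2"
  using gpoly_mono[of N1 N2] by (auto simp: gpolyF_def)

lemma Fract1_inj: "Fract x 1 = Fract y 1 \<longleftrightarrow> (x::'a::idom) = y"
  by (simp add: eq_fract)

lemma inv_gpolyF: "x \<in> gpolyF (dual UNIV) \<Longrightarrow> act_fract n x = x"
  by (auto simp: gpolyF_def act_fract_Fract1 act_triv gpoly_def)

lemma inv_gpolyF_conv:
  assumes "x \<in> gpolyF N" "\<And>n. act_fract n x = x"
  shows "x \<in> gpolyF (dual UNIV)"
proof -
  obtain p where p: "p \<in> gpoly N" "x = Fract p 1" using assms(1) by (auto simp: gpolyF_def)
  have "act n p = p" for n using assms(2)[of n] p(2) by (simp add: act_fract_Fract1 Fract1_inj)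
  then have "Poly_Mapping.keys p \<subseteq> dual UNIV" by (rule act_triv_conv)
  then have "p \<in> gpoly (dual UNIV)" using p(1) by (simp add: gpoly_def)
  then show ?thesis using p(2) by (simp add: gpolyF_def)
qed

lemma upper_bound_iff:
  "x \<in> upper_bound Lat \<omega> V \<longleftrightarrow> x \<in> gpolyF (dual Lat) \<and>
     (\<forall>v\<in>Lat. x \<in> (mu (dual Lat) (omega_char \<omega> v) v ^^ count_list V v) ` gpolyF (dual Lat))"
  by (simp add: upper_bound_def)

theorem proposition2p7:
  fixes \<omega> :: "('r::{finite,linorder}) lvec \<Rightarrow> 'r lvec \<Rightarrow> int"
    and V :: "'r lvec list"
    and L' :: "'r lvec set"
  assumes bilin_l: "\<And>x y z. \<omega> (x + y) z = \<omega> x z + \<omega> y z"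
    and bilin_r: "\<And>x y z. \<omega> x (y + z) = \<omega> x y + \<omega> x z"
    and skew: "\<And>x y. \<omega> x y = - \<omega> y x"
    and sub_zero: "0 \<in> L'"
    and sub_add: "\<And>x y. x \<in> L' \<Longrightarrow> y \<in> L' \<Longrightarrow> x + y \<in> L'"
    and sub_uminus: "\<And>x. x \<in> L' \<Longrightarrow> - x \<in> L'"
    and fin_index: "finite ((\<lambda>x. (\<lambda>y. x + y) ` L') ` UNIV)"
    and V_in: "set V \<subseteq> L'"
  shows "upper_bound UNIV \<omega> V = invariants (upper_bound L' \<omega> V)
       \<and> invariants (upper_bound L' \<omega> V) = upper_bound L' \<omega> V \<inter> gpolyF (dual UNIV)"
proof -
  define M :: "'r expo set" where "M = dual UNIV"
  define M' :: "'r expo set" where "M' = dual L'"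
  have MM: "M \<subseteq> M'" unfolding M_def M'_def by (rule dual_UNIV_sub)
  have aM: "omega_char \<omega> v \<in> M" for v unfolding M_def by (rule omega_char_dual[OF bilin_l])
  have gM: "good M (omega_char \<omega> v) v" for v
    unfolding good_def using aM[of v] omega_char_self[OF bilin_l skew, of v]
    by (auto simp: M_def dual_zero dual_add dual_def pair_add)
  have gM': "good M' (omega_char \<omega> v) v" if "v \<in> L'" for v
    unfolding good_def using aM[of v] MM omega_char_self[OF bilin_l skew, of v] that
    by (auto simp: M'_def dual_zero dual_add dual_def pair_add)
  have zM: "0 \<in> M" "0 \<in> M'" by (simp_all add: M_def M'_def dual_zero)
  have part2: "invariants (upper_bound L' \<omega> V) = upper_bound L' \<omega> V \<inter> gpolyF M"
  proof (intro set_eqI iffI)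
    fix x assume "x \<in> invariants (upper_bound L' \<omega> V)"
    then have "x \<in> upper_bound L' \<omega> V" "\<And>n. act_fract n x = x" by (auto simp: invariants_def)
    then show "x \<in> upper_bound L' \<omega> V \<inter> gpolyF M"
      using inv_gpolyF_conv[of x] by (auto simp: upper_bound_iff M_def)
  next
    fix x assume "x \<in> upper_bound L' \<omega> V \<inter> gpolyF M"
    then show "x \<in> invariants (upper_bound L' \<omega> V)"
      by (auto simp: invariants_def M_def inv_gpolyF)
  qed
  have part1: "upper_bound UNIV \<omega> V = upper_bound L' \<omega> V \<inter> gpolyF M"
  proof (intro set_eqI iffI)
    fix x assume x: "x \<in> upper_bound UNIV \<omega> V"
    then have xM: "x \<in> gpolyF M" by (simp add: upper_bound_iff M_def)
    have "x \<in> (mu M' (omega_char \<omega> v) v ^^ count_list V v) ` gpolyF M'" if v: "v \<in> L'" for v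
    proof -
      obtain y where y: "y \<in> gpolyF M" "x = (mu M (omega_char \<omega> v) v ^^ count_list V v) y"
        using x by (auto simp: upper_bound_iff M_def)
      have "x = (mu M' (omega_char \<omega> v) v ^^ count_list V v) y"
        using y(2) iter_mono[OF gM gM'[OF v] MM gpolyF_fracfield[OF zM(1) y(1)]] by simp
      moreover have "y \<in> gpolyF M'" using y(1) gpolyF_mono[OF MM] by auto
      ultimately show ?thesis by auto
    qed
    then show "x \<in> upper_bound L' \<omega> V \<inter> gpolyF M"
      using xM gpolyF_mono[OF MM] by (auto simp: upper_bound_iff M'_def)
  next
    fix x assume x: "x \<in> upper_bound L' \<omega> V \<inter> gpolyF M"
    then have xM: "x \<in> gpolyF M" and xU: "x \<in> upper_bound L' \<omega> V" by auto
    have "x \<in> (mu M (omega_char \<omega> v) v ^^ count_list V v) ` gpolyF M" for v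
    proof (cases "v \<in> L'")
      case False
      then have "count_list V v = 0" using V_in by (auto simp: count_list_0_iff)
      then show ?thesis using xM by simp
    next
      case v: True
      let ?T = "mu M' (omega_char \<omega> v) v ^^ count_list V v"
      obtain y where y: "y \<in> gpolyF M'" "x = ?T y"
        using xU v by (auto simp: upper_bound_iff M'_def)
      have yF: "y \<in> fracfield M'" by (rule gpolyF_fracfield[OF zM(2) y(1)])
      have "act_fract n y = y" for n
      proof -
        have "?T (act_fract n y) = act_fract n (?T y)"
          by (rule iter_act[OF gM'[OF v] aM[unfolded M_def] yF, symmetric])
        also have "\<dots> = ?T y" using y(2) inv_gpolyF[of x n] xM by (simp add: M_def)
        finally show ?thesis
          by (rule iter_inj[OF gM'[OF v] act_fract_fracfield[OF yF] yF])
      qed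
      then have yM: "y \<in> gpolyF M" unfolding M_def by (rule inv_gpolyF_conv[OF y(1)])
      have "x = (mu M (omega_char \<omega> v) v ^^ count_list V v) y"
        using y(2) iter_mono[OF gM gM'[OF v] MM gpolyF_fracfield[OF zM(1) yM]] by simp
      then show ?thesis using yM by auto
    qed
    then show "x \<in> upper_bound UNIV \<omega> V" using xM by (simp add: upper_bound_iff M_def)
  qed
  show ?thesis using part1 part2 by (simp add: M_def)
qed


end
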